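(* The scheme $\Upsilon$ is a commutative normal subgroup of $U_L$ and $U_L=U_\phi\ltimes\Upsilon$. Moreover, given $\beta=\alpha_{ij}\in\Phi(U_\phi)$, there exists a unique root $\alpha\in\Phi(\Upsilon)$ such that $\alpha+\beta$ is a root of $\mathrm{GL}_n$; explicitly $\alpha=\alpha_{pi}$ where $p\in\{1,\dots,d\}$ is determined by $p\equiv i\bmod d$, and then $\alpha+\beta=\alpha_{pj}$.
   Context: $G=\mathrm{GL}_n$ over a field, $1\le d\le n$, $\alpha_{ij}$ the root with root space $kE_{ij}$. $G_0=\{g\in\mathrm{GL}_n:g_{ij}=0\text{ unless }i\equiv j\bmod d\}$, $L$ a group identified with $G_0$ (the Levi quotient of the parahoric attached to $\check\rho/d$), and roots of $L$ are identified with the roots $\alpha_{ij}$, $i\equiv j\bmod d$, of $G_0$. $U_L$ is the unipotent radical of the upper triangular Borel of $L$, i.e. generated by the root subgroups $U_{\alpha_{ij}}$ with $i<j$, $i\equiv j\bmod d$. $U_\phi\subset U_L$ is the subgroup generated by the $U_\alpha$ with $\alpha\in\Phi(U_\phi)=\{\alpha_{ij}: d+1\le i\le n,\ i+d\le j\le n,\ j\equiv i\bmod d\}$, and $\Upsilon=\prod_{\alpha\in\Phi(\Upsilon)}U_\alpha$ with $\Phi(\Upsilon)=\{\alpha_{ij}:1\le i\le d,\ i+d\le j\le n,\ j\equiv i\bmod d\}$ (so $\Phi(\Upsilon)=\Phi(U_L)-\Phi(U_\phi)$). *)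

theory Defs
  imports "HOL-Algebra.Algebra" "HOL-Library.Product_Lexorder"
begin

text \<open>n x n matrices over a field are functions nat => nat => 'a, indexed by 1..n,
  and required to vanish outside {1..n} x {1..n}.\<close>

definition supp_ok :: "nat \<Rightarrow> (nat \<Rightarrow> nat \<Rightarrow> 'a::field) \<Rightarrow> bool" where
  "supp_ok n A \<longleftrightarrow> (\<forall>i j. \<not> (i \<in> {1..n} \<and> j \<in> {1..n}) \<longrightarrow> A i j = 0)"

definition mat_mul :: "nat \<Rightarrow> (nat \<Rightarrow> nat \<Rightarrow> 'a::field) \<Rightarrow> (nat \<Rightarrow> nat \<Rightarrow> 'a) \<Rightarrow> (nat \<Rightarrow> nat \<Rightarrow> 'a)" where
  "mat_mul n A B = (\<lambda>i j. if i \<in> {1..n} \<and> j \<in> {1..n} then (\<Sum>k=1..n. A i k * B k j) else 0)"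

definition mat_one :: "nat \<Rightarrow> (nat \<Rightarrow> nat \<Rightarrow> 'a::field)" where
  "mat_one n = (\<lambda>i j. if i = j \<and> i \<in> {1..n} then 1 else 0)"

definition GLn :: "nat \<Rightarrow> (nat \<Rightarrow> nat \<Rightarrow> 'a::field) monoid" where
  "GLn n = \<lparr> carrier = {A. supp_ok n A \<and> (\<exists>B. supp_ok n B \<and> mat_mul n A B = mat_one n \<and> mat_mul n B A = mat_one n)},
            monoid.mult = mat_mul n, one = mat_one n \<rparr>"

definition root_subgroup :: "nat \<Rightarrow> nat \<times> nat \<Rightarrow> (nat \<Rightarrow> nat \<Rightarrow> 'a::field) set" where
  "root_subgroup n ij = {(\<lambda>a b. mat_one n a b + (if (a, b) = ij then c else 0)) | c. True}"

text \<open>Roots alpha_ij = e_i - e_j of GL_n, as characters of the diagonal torus (Z-valued functions).\<close>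
definition root_char :: "nat \<times> nat \<Rightarrow> (nat \<Rightarrow> int)" where
  "root_char ij = (\<lambda>k. (if k = fst ij then 1 else 0) - (if k = snd ij then 1 else 0))"

definition roots_GL :: "nat \<Rightarrow> (nat \<Rightarrow> int) set" where
  "roots_GL n = {root_char (i, j) | i j. i \<in> {1..n} \<and> j \<in> {1..n} \<and> i \<noteq> j}"

definition Phi_UL :: "nat \<Rightarrow> nat \<Rightarrow> (nat \<times> nat) set" where
  "Phi_UL n d = {(i, j). 1 \<le> i \<and> i < j \<and> j \<le> n \<and> i mod d = j mod d}"

definition Phi_Uphi :: "nat \<Rightarrow> nat \<Rightarrow> (nat \<times> nat) set" where
  "Phi_Uphi n d = {(i, j). d + 1 \<le> i \<and> i \<le> n \<and> i + d \<le> j \<and> j \<le> n \<and> j mod d = i mod d}"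

definition Phi_Ups :: "nat \<Rightarrow> nat \<Rightarrow> (nat \<times> nat) set" where
  "Phi_Ups n d = {(i, j). 1 \<le> i \<and> i \<le> d \<and> i + d \<le> j \<and> j \<le> n \<and> j mod d = i mod d}"

definition U_L :: "nat \<Rightarrow> nat \<Rightarrow> (nat \<Rightarrow> nat \<Rightarrow> 'a::field) set" where
  "U_L n d = generate (GLn n) (\<Union> (root_subgroup n ` Phi_UL n d))"

definition U_phi :: "nat \<Rightarrow> nat \<Rightarrow> (nat \<Rightarrow> nat \<Rightarrow> 'a::field) set" where
  "U_phi n d = generate (GLn n) (\<Union> (root_subgroup n ` Phi_Uphi n d))"

definition Upsilon :: "nat \<Rightarrow> nat \<Rightarrow> (nat \<Rightarrow> nat \<Rightarrow> 'a::field) set" where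
  "Upsilon n d = foldr (\<lambda>ij S. set_mult (GLn n) (root_subgroup n ij) S)
                   (sorted_list_of_set (Phi_Ups n d)) {mat_one n}"

end

theory Submission
  imports Defs
begin


lemma sum_one_left:
  fixes f :: "nat \<Rightarrow> 'a::field"
  assumes "i \<in> {1..n}"
  shows "(\<Sum>k=1..n. mat_one n i k * f k) = f i"
proof -
  have "(\<Sum>k=1..n. mat_one n i k * f k) = (\<Sum>k=1..n. if k = i then f i else 0)"
    by (rule sum.cong) (auto simp: mat_one_def)
  also have "\<dots> = f i" using assms by simp
  finally show ?thesis .
qed

lemma sum_one_right:
  fixes f :: "nat \<Rightarrow> 'a::field"
  assumes "j \<in> {1..n}"
  shows "(\<Sum>k=1..n. f k * mat_one n k j) = f j"
proof -
  have "(\<Sum>k=1..n. f k * mat_one n k j) = (\<Sum>k=1..n. if k = j then f j else 0)"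
    by (rule sum.cong) (auto simp: mat_one_def)
  also have "\<dots> = f j" using assms by simp
  finally show ?thesis .
qed

lemma supp_ok_mul: "supp_ok n (mat_mul n A B)"
  by (auto simp: supp_ok_def mat_mul_def)

lemma supp_ok_one: "supp_ok n (mat_one n)"
  by (auto simp: supp_ok_def mat_one_def)

lemma mul_one_left: "supp_ok n A \<Longrightarrow> mat_mul n (mat_one n) A = A"
proof (rule ext, rule ext)
  fix i j assume "supp_ok n A"
  then show "mat_mul n (mat_one n) A i j = A i j"
    using sum_one_left[of i n "\<lambda>k. A k j"] by (auto simp: mat_mul_def supp_ok_def)
qed

lemma mul_one_right: "supp_ok n A \<Longrightarrow> mat_mul n A (mat_one n) = A"
proof (rule ext, rule ext)
  fix i j assume "supp_ok n A"
  then show "mat_mul n A (mat_one n) i j = A i j"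
    using sum_one_right[of j n "\<lambda>k. A i k"] by (auto simp: mat_mul_def supp_ok_def)
qed

lemma mul_assoc: "mat_mul n (mat_mul n A B) C = mat_mul n A (mat_mul n B C)"
proof (rule ext, rule ext)
  fix i j
  show "mat_mul n (mat_mul n A B) C i j = mat_mul n A (mat_mul n B C) i j"
  proof (cases "i \<in> {1..n} \<and> j \<in> {1..n}")
    case True
    have "mat_mul n (mat_mul n A B) C i j = (\<Sum>k=1..n. (\<Sum>l=1..n. A i l * B l k) * C k j)"
      using True by (auto simp: mat_mul_def intro!: sum.cong)
    also have "\<dots> = (\<Sum>k=1..n. \<Sum>l=1..n. A i l * B l k * C k j)"
      by (simp add: sum_distrib_right)
    also have "\<dots> = (\<Sum>l=1..n. \<Sum>k=1..n. A i l * B l k * C k j)"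
      by (rule sum.swap)
    also have "\<dots> = (\<Sum>l=1..n. A i l * (\<Sum>k=1..n. B l k * C k j))"
      by (simp add: sum_distrib_left mult.assoc)
    also have "\<dots> = mat_mul n A (mat_mul n B C) i j"
      using True by (auto simp: mat_mul_def intro!: sum.cong)
    finally show ?thesis .
  qed (auto simp: mat_mul_def)
qed

lemma group_GLn: "group (GLn n :: (nat \<Rightarrow> nat \<Rightarrow> 'a::field) monoid)"
proof (rule groupI)
  fix x y :: "nat \<Rightarrow> nat \<Rightarrow> 'a"
  assume x: "x \<in> carrier (GLn n)" and y: "y \<in> carrier (GLn n)"
  then obtain x' y' where x': "supp_ok n x'" "mat_mul n x x' = mat_one n" "mat_mul n x' x = mat_one n"
    and y': "supp_ok n y'" "mat_mul n y y' = mat_one n" "mat_mul n y' y = mat_one n"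
    by (auto simp: GLn_def)
  have yok: "supp_ok n y" and xok: "supp_ok n x" using x y by (auto simp: GLn_def)
  have "mat_mul n (mat_mul n x y) (mat_mul n y' x') = mat_one n"
    by (metis mul_assoc y'(2) mul_one_left x'(1) x'(2))
  moreover have "mat_mul n (mat_mul n y' x') (mat_mul n x y) = mat_one n"
    by (metis mul_assoc x'(3) mul_one_left yok y'(3))
  ultimately show "x \<otimes>\<^bsub>GLn n\<^esub> y \<in> carrier (GLn n)"
    by (auto simp: GLn_def supp_ok_mul intro!: exI[of _ "mat_mul n y' x'"])
next
  show "\<one>\<^bsub>GLn n\<^esub> \<in> carrier (GLn n)"
    by (auto simp: GLn_def supp_ok_one mul_one_left intro!: exI[of _ "mat_one n"])
next
  fix x y z :: "nat \<Rightarrow> nat \<Rightarrow> 'a"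
  show "x \<otimes>\<^bsub>GLn n\<^esub> y \<otimes>\<^bsub>GLn n\<^esub> z = x \<otimes>\<^bsub>GLn n\<^esub> (y \<otimes>\<^bsub>GLn n\<^esub> z)"
    by (simp add: GLn_def mul_assoc)
next
  fix x :: "nat \<Rightarrow> nat \<Rightarrow> 'a"
  assume "x \<in> carrier (GLn n)"
  then show "\<one>\<^bsub>GLn n\<^esub> \<otimes>\<^bsub>GLn n\<^esub> x = x" by (simp add: GLn_def mul_one_left)
next
  fix x :: "nat \<Rightarrow> nat \<Rightarrow> 'a"
  assume "x \<in> carrier (GLn n)"
  then obtain x' where x': "supp_ok n x'" "mat_mul n x x' = mat_one n" "mat_mul n x' x = mat_one n"
    and "supp_ok n x" by (auto simp: GLn_def)
  then show "\<exists>y\<in>carrier (GLn n). y \<otimes>\<^bsub>GLn n\<^esub> x = \<one>\<^bsub>GLn n\<^esub>"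
    by (auto simp: GLn_def intro!: bexI[of _ x'])
qed

definition rootel :: "nat \<Rightarrow> nat \<times> nat \<Rightarrow> 'a::field \<Rightarrow> (nat \<Rightarrow> nat \<Rightarrow> 'a)" where
  "rootel n ij c = (\<lambda>a b. mat_one n a b + (if (a, b) = ij then c else 0))"

lemma root_subgroup_eq: "root_subgroup n ij = range (rootel n ij)"
  by (auto simp: root_subgroup_def rootel_def)

lemma mul_root:
  fixes M :: "nat \<Rightarrow> nat \<Rightarrow> 'a::field"
  assumes ij: "i \<in> {1..n}" "j \<in> {1..n}" "i \<noteq> j" and M: "supp_ok n M"
    and row: "\<And>b. M j b = mat_one n j b"
  shows "mat_mul n (rootel n (i, j) c) M = (\<lambda>a b. M a b + (if (a, b) = (i, j) then c else 0))"
proof (rule ext, rule ext)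
  fix a b
  show "mat_mul n (rootel n (i, j) c) M a b = M a b + (if (a, b) = (i, j) then c else 0)"
  proof (cases "a \<in> {1..n} \<and> b \<in> {1..n}")
    case True
    have "mat_mul n (rootel n (i, j) c) M a b
        = (\<Sum>k=1..n. mat_one n a k * M k b + (if k = j then (if a = i then c * M j b else 0) else 0))"
      using True by (auto simp: mat_mul_def rootel_def distrib_right intro!: sum.cong)
    also have "\<dots> = (\<Sum>k=1..n. mat_one n a k * M k b) + (if a = i then c * M j b else 0)"
      using ij by (simp add: sum.distrib)
    also have "\<dots> = M a b + (if (a, b) = (i, j) then c else 0)"
      using True sum_one_left[of a n "\<lambda>k. M k b"] row[of b] ij
      by (auto simp: mat_one_def)
    finally show ?thesis .
  next
    case False
    then show ?thesis using M ij by (auto simp: mat_mul_def supp_ok_def)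
  qed
qed

lemma rootel_supp: "i \<in> {1..n} \<Longrightarrow> j \<in> {1..n} \<Longrightarrow> supp_ok n (rootel n (i, j) c)"
  by (auto simp: supp_ok_def rootel_def mat_one_def)

lemma rootel_row: "i \<noteq> j \<Longrightarrow> rootel n (i, j) c j b = mat_one n j b"
  by (auto simp: rootel_def)

lemma rootel_inv:
  assumes "i \<in> {1..n}" "j \<in> {1..n}" "i \<noteq> j"
  shows "mat_mul n (rootel n (i, j) c) (rootel n (i, j) (- c)) = mat_one n"
proof -
  have "mat_mul n (rootel n (i, j) c) (rootel n (i, j) (- c))
       = (\<lambda>a b. rootel n (i, j) (- c) a b + (if (a, b) = (i, j) then c else 0))"
    using mul_root[OF assms rootel_supp[OF assms(1,2)] rootel_row[OF assms(3)]] .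
  then show ?thesis by (simp add: rootel_def fun_eq_iff)
qed

lemma rootel_carrier:
  assumes "i \<in> {1..n}" "j \<in> {1..n}" "i \<noteq> j"
  shows "rootel n (i, j) (c::'a::field) \<in> carrier (GLn n)"
  using rootel_inv[OF assms, of c] rootel_inv[OF assms, of "-c"] rootel_supp[OF assms(1,2)]
  by (auto simp: GLn_def)

lemma rootel_inv_G:
  assumes "i \<in> {1..n}" "j \<in> {1..n}" "i \<noteq> j"
  shows "inv\<^bsub>GLn n\<^esub> (rootel n (i, j) (c::'a::field)) = rootel n (i, j) (- c)"
proof -
  interpret group "GLn n :: (nat \<Rightarrow> nat \<Rightarrow> 'a) monoid" by (rule group_GLn)
  show ?thesis
    using rootel_inv[OF assms, of "-c"] rootel_carrier[OF assms]
    by (intro inv_equality) (auto simp: GLn_def)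
qed

definition UT :: "nat \<Rightarrow> (nat \<times> nat) set \<Rightarrow> (nat \<Rightarrow> nat \<Rightarrow> 'a::field) set" where
  "UT n S = {A. supp_ok n A \<and> (\<forall>i\<in>{1..n}. A i i = 1) \<and> (\<forall>i j. i \<noteq> j \<longrightarrow> A i j \<noteq> 0 \<longrightarrow> (i, j) \<in> S)}"

definition upper :: "nat \<Rightarrow> (nat \<times> nat) set \<Rightarrow> bool" where
  "upper n S \<longleftrightarrow> (\<forall>i j. (i, j) \<in> S \<longrightarrow> 1 \<le> i \<and> i < j \<and> j \<le> n)"

definition closedS :: "(nat \<times> nat) set \<Rightarrow> bool" where
  "closedS S \<longleftrightarrow> (\<forall>i k j. (i, k) \<in> S \<longrightarrow> (k, j) \<in> S \<longrightarrow> (i, j) \<in> S)"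

abbreviation roots :: "nat \<Rightarrow> (nat \<times> nat) set \<Rightarrow> (nat \<Rightarrow> nat \<Rightarrow> 'a::field) set" where
  "roots n S \<equiv> \<Union> (root_subgroup n ` S)"

lemma upper_pair: "upper n S \<Longrightarrow> (i, j) \<in> S \<Longrightarrow> 1 \<le> i \<and> i < j \<and> j \<le> n"
  by (simp add: upper_def)

lemma upper_sub: assumes "upper n S" shows "S \<subseteq> {1..n} \<times> {1..n}"
proof (rule subsetI)
  fix x assume x: "x \<in> S"
  obtain a b where ab: "x = (a, b)" by force
  have "1 \<le> a \<and> a < b \<and> b \<le> n" using upper_pair[OF assms] x ab by blast
  then show "x \<in> {1..n} \<times> {1..n}" using ab by auto
qed

lemma upper_fin: "upper n S \<Longrightarrow> finite S"
  by (rule finite_subset[OF upper_sub]) auto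

lemma UT_subset_generate:
  assumes up: "upper n S"
  shows "UT n S \<subseteq> generate (GLn n) (roots n S :: (nat \<Rightarrow> nat \<Rightarrow> 'a::field) set)"
proof -
  define nz where "nz = (\<lambda>A::nat \<Rightarrow> nat \<Rightarrow> 'a. {(a, b). a \<noteq> b \<and> A a b \<noteq> 0})"
  have main: "\<forall>A. card (nz A) = m \<longrightarrow> A \<in> UT n S \<longrightarrow> A \<in> generate (GLn n) (roots n S)" for m
  proof (induction m)
    case 0
    show ?case
    proof (intro allI impI)
      fix A :: "nat \<Rightarrow> nat \<Rightarrow> 'a" assume c: "card (nz A) = 0" and A: "A \<in> UT n S"
      have "nz A \<subseteq> S" using A by (auto simp: nz_def UT_def)
      moreover have "finite S" using up by (rule upper_fin)
      ultimately have "nz A = {}" using c finite_subset by (metis card_0_eq)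
      then have "A = mat_one n" using A
        by (auto simp: nz_def UT_def supp_ok_def mat_one_def fun_eq_iff)
      then show "A \<in> generate (GLn n) (roots n S)"
        using generate.one[of "GLn n" "roots n S"] by (simp add: GLn_def)
    qed
  next
    case (Suc m)
    show ?case
    proof (intro allI impI)
      fix A :: "nat \<Rightarrow> nat \<Rightarrow> 'a" assume c: "card (nz A) = Suc m" and A: "A \<in> UT n S"
      have sub: "nz A \<subseteq> S" using A by (auto simp: nz_def UT_def)
      moreover have finS: "finite S" using up by (rule upper_fin)
      ultimately have fin: "finite (nz A)" by (rule finite_subset)
      have ne: "nz A \<noteq> {}" using c by auto
      define i where "i = Max (fst ` nz A)"
      have "i \<in> fst ` nz A" unfolding i_def using fin ne by (intro Max_in) auto
      then obtain j where ij: "(i, j) \<in> nz A" by force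
      have ijS: "(i, j) \<in> S" using ij sub by auto
      then have rng: "i \<in> {1..n}" "j \<in> {1..n}" "i < j" using upper_pair[OF up ijS] by auto
      have Aok: "supp_ok n A" using A by (auto simp: UT_def)
      have rowA: "A j b = mat_one n j b" for b
      proof (cases "b = j")
        case True then show ?thesis using A rng by (auto simp: UT_def mat_one_def)
      next
        case False
        show ?thesis
        proof (rule ccontr)
          assume "A j b \<noteq> mat_one n j b"
          then have "(j, b) \<in> nz A" using False by (auto simp: nz_def mat_one_def)
          then have "j \<le> i" unfolding i_def using fin by (intro Max_ge) force+
          then show False using rng by auto
        qed
      qed
      define A' where "A' = (\<lambda>a b. if (a, b) = (i, j) then 0 else A a b)"
      have A'ok: "supp_ok n A'" using Aok by (auto simp: supp_ok_def A'_def)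
      have rowA': "A' j b = mat_one n j b" for b using rowA rng by (auto simp: A'_def)
      have A'UT: "A' \<in> UT n S" using A rng by (auto simp: UT_def A'_def supp_ok_def)
      have "nz A' = nz A - {(i, j)}" by (auto simp: nz_def A'_def)
      then have "card (nz A') = m" using c ij fin by simp
      then have A'gen: "A' \<in> generate (GLn n) (roots n S)" using Suc.IH A'UT by blast
      have eq: "mat_mul n (rootel n (i, j) (A i j)) A' = A"
        using mul_root[OF rng(1,2) _ A'ok rowA'] rng by (auto simp: A'_def fun_eq_iff)
      have "rootel n (i, j) (A i j) \<in> roots n S"
        using ijS by (auto simp: root_subgroup_eq)
      then have "rootel n (i, j) (A i j) \<in> generate (GLn n) (roots n S)" by (rule generate.incl)
      from generate.eng[OF this A'gen] eq show "A \<in> generate (GLn n) (roots n S)"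
        by (simp add: GLn_def)
    qed
  qed
  show ?thesis using main by blast
qed

lemma UT_mult:
  assumes up: "upper n S" and cl: "closedS S" and A: "A \<in> UT n S" and B: "B \<in> UT n S"
  shows "mat_mul n A B \<in> UT n S"
proof -
  have diag: "mat_mul n A B i i = 1" if i: "i \<in> {1..n}" for i
  proof -
    have "mat_mul n A B i i = (\<Sum>k=1..n. A i k * B k i)" using i by (simp add: mat_mul_def)
    also have "\<dots> = (\<Sum>k=1..n. if k = i then 1 else 0)"
    proof (rule sum.cong[OF refl])
      fix k assume k: "k \<in> {1..n}"
      show "A i k * B k i = (if k = i then 1 else 0)"
      proof (cases "k = i")
        case True then show ?thesis using A B i by (auto simp: UT_def)
      next
        case False
        have "A i k = 0 \<or> B k i = 0"
        proof (rule ccontr)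
          assume "\<not> (A i k = 0 \<or> B k i = 0)"
          then have "(i, k) \<in> S" "(k, i) \<in> S" using A B False by (auto simp: UT_def)
          then show False using upper_pair[OF up, of i k] upper_pair[OF up, of k i] by linarith
        qed
        then show ?thesis using False by auto
      qed
    qed
    also have "\<dots> = 1" using i by simp
    finally show ?thesis .
  qed
  have off: "(i, j) \<in> S" if ij: "i \<noteq> j" "mat_mul n A B i j \<noteq> 0" for i j
  proof -
    have rng: "i \<in> {1..n}" "j \<in> {1..n}" using ij(2) by (auto simp: mat_mul_def split: if_splits)
    then have "(\<Sum>k=1..n. A i k * B k j) \<noteq> 0" using ij(2) by (simp add: mat_mul_def)
    then obtain k where k: "k \<in> {1..n}" "A i k * B k j \<noteq> 0"
      by (meson sum.neutral)
    then have nz: "A i k \<noteq> 0" "B k j \<noteq> 0" by auto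
    show ?thesis
    proof (cases "k = i")
      case True then show ?thesis using nz B ij by (auto simp: UT_def)
    next
      case ki: False
      then have ik: "(i, k) \<in> S" using nz A by (auto simp: UT_def)
      show ?thesis
      proof (cases "k = j")
        case True then show ?thesis using ik by simp
      next
        case False
        then have "(k, j) \<in> S" using nz B by (auto simp: UT_def)
        then show ?thesis using ik cl by (auto simp: closedS_def)
      qed
    qed
  qed
  show ?thesis using diag off by (auto simp: UT_def supp_ok_mul)
qed

lemma one_UT: "mat_one n \<in> UT n S"
  using supp_ok_one[of n] by (auto simp: UT_def mat_one_def)

lemma rootel_UT:
  assumes up: "upper n S" and ij: "(i, j) \<in> S"
  shows "rootel n (i, j) c \<in> UT n S"
proof -
  have r: "1 \<le> i \<and> i < j \<and> j \<le> n" using upper_pair[OF up ij] .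
  then show ?thesis using ij rootel_supp[of i n j c]
    by (auto simp: UT_def rootel_def mat_one_def)
qed

lemma generate_subset_UT:
  assumes up: "upper n S" and cl: "closedS S"
  shows "generate (GLn n) (roots n S :: (nat \<Rightarrow> nat \<Rightarrow> 'a::field) set) \<subseteq> UT n S"
proof
  fix x :: "nat \<Rightarrow> nat \<Rightarrow> 'a" assume "x \<in> generate (GLn n) (roots n S)"
  then show "x \<in> UT n S"
  proof (induction rule: generate.induct)
    case one then show ?case by (simp add: GLn_def one_UT)
  next
    case (incl h)
    then obtain i j c where ij: "(i, j) \<in> S" and h: "h = rootel n (i, j) c"
      by (auto simp: root_subgroup_eq)
    then show ?case using rootel_UT[OF up ij] by simp
  next
    case (inv h)
    then obtain i j c where ij: "(i, j) \<in> S" and h: "h = rootel n (i, j) c"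
      by (auto simp: root_subgroup_eq)
    have r: "1 \<le> i \<and> i < j \<and> j \<le> n" using upper_pair[OF up ij] .
    then have "inv\<^bsub>GLn n\<^esub> h = rootel n (i, j) (- c)" using h rootel_inv_G[of i n j c] by simp
    then show ?case using rootel_UT[OF up ij] by simp
  next
    case (eng h1 h2)
    then show ?case using UT_mult[OF up cl] by (simp add: GLn_def)
  qed
qed

lemma UT_eq_generate:
  assumes up: "upper n S" and cl: "closedS S"
  shows "generate (GLn n) (roots n S :: (nat \<Rightarrow> nat \<Rightarrow> 'a::field) set) = UT n S"
  using generate_subset_UT[OF up cl] UT_subset_generate[OF up] by blast

lemma roots_carrier:
  assumes up: "upper n S"
  shows "(roots n S :: (nat \<Rightarrow> nat \<Rightarrow> 'a::field) set) \<subseteq> carrier (GLn n)"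
proof
  fix x :: "nat \<Rightarrow> nat \<Rightarrow> 'a" assume "x \<in> roots n S"
  then obtain i j c where ij: "(i, j) \<in> S" and h: "x = rootel n (i, j) c"
    by (auto simp: root_subgroup_eq)
  have r: "1 \<le> i \<and> i < j \<and> j \<le> n" using upper_pair[OF up ij] .
  then show "x \<in> carrier (GLn n)" using h rootel_carrier[of i n j c] by simp
qed

lemma UT_subgroup:
  assumes up: "upper n S" and cl: "closedS S"
  shows "subgroup (UT n S :: (nat \<Rightarrow> nat \<Rightarrow> 'a::field) set) (GLn n)"
  using group.generate_is_subgroup[OF group_GLn roots_carrier[OF up]] UT_eq_generate[OF up cl]
  by metis

lemma mod_gap:
  fixes a b d :: nat
  assumes "a < b" "a mod d = b mod d"
  shows "a + d \<le> b"
proof -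
  have "d dvd (b - a)" using assms mod_eq_dvd_iff_nat[of a b d] by simp
  moreover have "b - a > 0" using assms by simp
  ultimately have "d \<le> b - a" by (rule dvd_imp_le)
  then show ?thesis using assms by simp
qed

lemma upper_UL: "upper n (Phi_UL n d)"
  by (auto simp: upper_def Phi_UL_def)

lemma upper_Uphi: "1 \<le> d \<Longrightarrow> upper n (Phi_Uphi n d)"
  by (auto simp: upper_def Phi_Uphi_def)

lemma upper_Ups: "1 \<le> d \<Longrightarrow> upper n (Phi_Ups n d)"
  by (auto simp: upper_def Phi_Ups_def)

lemma closed_UL: "closedS (Phi_UL n d)"
  by (auto simp: closedS_def Phi_UL_def)

lemma closed_Uphi: "closedS (Phi_Uphi n d)"
  by (auto simp: closedS_def Phi_Uphi_def)

lemma closed_Ups: "1 \<le> d \<Longrightarrow> closedS (Phi_Ups n d)"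
  by (auto simp: closedS_def Phi_Ups_def)

lemma UT_mono: "S \<subseteq> T \<Longrightarrow> UT n S \<subseteq> UT n T"
  by (auto simp: UT_def)

lemma row_triv:
  assumes "M \<in> UT n S" "S \<subseteq> Phi_Ups n d" "d < j" "j \<le> n"
  shows "M j b = mat_one n j b"
proof (cases "b = j")
  case True then show ?thesis using assms by (auto simp: UT_def mat_one_def)
next
  case False
  have "M j b = 0"
  proof (rule ccontr)
    assume "M j b \<noteq> 0"
    then have "(j, b) \<in> Phi_Ups n d" using assms False by (auto simp: UT_def)
    then show False using assms by (auto simp: Phi_Ups_def)
  qed
  then show ?thesis using False by (simp add: mat_one_def)
qed

lemma UT_empty: "UT n {} = {mat_one n}"
proof -
  have "A = mat_one n" if "A \<in> UT n {}" for A :: "nat \<Rightarrow> nat \<Rightarrow> 'a::field"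
    using that by (auto simp: UT_def supp_ok_def mat_one_def fun_eq_iff)
  then show ?thesis using one_UT by blast
qed

lemma set_mult_root_UT:
  assumes d1: "1 \<le> d" and ij: "ij \<in> Phi_Ups n d" and L: "L \<subseteq> Phi_Ups n d"
  shows "set_mult (GLn n) (root_subgroup n ij) (UT n L :: (nat \<Rightarrow> nat \<Rightarrow> 'a::field) set)
       = UT n (insert ij L)"
proof -
  obtain i j where ijd: "ij = (i, j)" by force
  have r: "1 \<le> i" "i \<le> d" "i + d \<le> j" "j \<le> n" using ij ijd by (auto simp: Phi_Ups_def)
  then have rng: "i \<in> {1..n}" "j \<in> {1..n}" "i \<noteq> j" "d < j" using d1 by auto
  have prod: "mat_mul n (rootel n (i, j) c) M = (\<lambda>a b. M a b + (if (a, b) = (i, j) then c else 0))"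
    if "M \<in> UT n L" for M :: "nat \<Rightarrow> nat \<Rightarrow> 'a" and c
    using that by (intro mul_root rng) (auto simp: UT_def intro: row_triv[OF _ L rng(4) r(4)])
  show ?thesis
  proof
    show "set_mult (GLn n) (root_subgroup n ij) (UT n L) \<subseteq> (UT n (insert ij L) :: (nat \<Rightarrow> nat \<Rightarrow> 'a) set)"
    proof
      fix x assume "x \<in> set_mult (GLn n) (root_subgroup n ij) (UT n L :: (nat \<Rightarrow> nat \<Rightarrow> 'a) set)"
      then obtain c M where M: "M \<in> UT n L" and x: "x = mat_mul n (rootel n (i, j) c) M"
        by (auto simp: set_mult_def root_subgroup_eq ijd GLn_def)
      then show "x \<in> UT n (insert ij L)" using prod[OF M, of c] rng ijd
        by (auto simp: UT_def supp_ok_def)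
    qed
  next
    show "(UT n (insert ij L) :: (nat \<Rightarrow> nat \<Rightarrow> 'a) set) \<subseteq> set_mult (GLn n) (root_subgroup n ij) (UT n L)"
    proof
      fix A :: "nat \<Rightarrow> nat \<Rightarrow> 'a" assume A: "A \<in> UT n (insert ij L)"
      define A' where "A' = (\<lambda>a b. if (a, b) = (i, j) then 0 else A a b)"
      have A'UT: "A' \<in> UT n L" using A rng ijd by (auto simp: UT_def A'_def supp_ok_def)
      have "mat_mul n (rootel n (i, j) (A i j)) A' = A"
        using prod[OF A'UT] by (auto simp: A'_def fun_eq_iff)
      then show "A \<in> set_mult (GLn n) (root_subgroup n ij) (UT n L)"
        using A'UT by (auto simp: set_mult_def root_subgroup_eq ijd GLn_def intro!: exI[of _ "A i j"] bexI[of _ A'])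
    qed
  qed
qed

lemma foldr_UT:
  assumes d1: "1 \<le> d"
  shows "set xs \<subseteq> Phi_Ups n d \<Longrightarrow>
    foldr (\<lambda>ij S. set_mult (GLn n) (root_subgroup n ij) S) xs {mat_one n}
      = (UT n (set xs) :: (nat \<Rightarrow> nat \<Rightarrow> 'a::field) set)"
proof (induction xs)
  case Nil then show ?case by (simp add: UT_empty)
next
  case (Cons ij xs)
  then show ?case using set_mult_root_UT[OF d1, of ij n "set xs"] by simp
qed

lemma Upsilon_UT:
  assumes d1: "1 \<le> d"
  shows "(Upsilon n d :: (nat \<Rightarrow> nat \<Rightarrow> 'a::field) set) = UT n (Phi_Ups n d)"
proof -
  have fin: "finite (Phi_Ups n d)" using upper_fin[OF upper_Ups[OF d1]] .
  show ?thesis unfolding Upsilon_def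
    using foldr_UT[OF d1, of "sorted_list_of_set (Phi_Ups n d)" n] fin by simp
qed




lemma UT_I:
  assumes "\<And>i j. \<not> (i \<in> {1..n} \<and> j \<in> {1..n}) \<Longrightarrow> A i j = 0"
    and "\<And>i. i \<in> {1..n} \<Longrightarrow> A i i = 1"
    and "\<And>i j. i \<noteq> j \<Longrightarrow> A i j \<noteq> 0 \<Longrightarrow> (i, j) \<in> S"
  shows "A \<in> UT n S"
  using assms unfolding UT_def supp_ok_def by blast

lemma UT_out: "A \<in> UT n S \<Longrightarrow> \<not> (i \<in> {1..n} \<and> j \<in> {1..n}) \<Longrightarrow> A i j = 0"
  unfolding UT_def supp_ok_def by blast

lemma UT_diag: "A \<in> UT n S \<Longrightarrow> i \<in> {1..n} \<Longrightarrow> A i i = 1"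
  unfolding UT_def by blast

lemma UT_off: "A \<in> UT n S \<Longrightarrow> i \<noteq> j \<Longrightarrow> A i j \<noteq> 0 \<Longrightarrow> (i, j) \<in> S"
  unfolding UT_def by blast

lemma mat_mul_out: "\<not> (i \<in> {1..n} \<and> j \<in> {1..n}) \<Longrightarrow> mat_mul n A B i j = 0"
  unfolding mat_mul_def by (rule if_not_P)

lemma mat_one_out: "\<not> (i \<in> {1..n} \<and> j \<in> {1..n}) \<Longrightarrow> mat_one n i j = 0"
  unfolding mat_one_def by (rule if_not_P) blast

lemma Ups_mult_formula:
  assumes A: "A \<in> UT n (Phi_Ups n d)" and B: "B \<in> UT n (Phi_Ups n d)"
  shows "mat_mul n A B = (\<lambda>i j. A i j + B i j - mat_one n i j)"
proof (rule ext, rule ext)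
  fix i j
  show "mat_mul n A B i j = A i j + B i j - mat_one n i j"
  proof (cases "i \<in> {1..n} \<and> j \<in> {1..n}")
    case True
    have S1: "(\<Sum>k=1..n. if k = i \<and> k = j then 1 else (0::'a)) = mat_one n i j"
    proof (cases "i = j")
      case True then show ?thesis using \<open>i \<in> {1..n} \<and> j \<in> {1..n}\<close> by (simp add: mat_one_def)
    next
      case False
      then have "\<forall>k\<in>{1..n}. (if k = i \<and> k = j then 1 else 0) = (0::'a)" by auto
      from sum.neutral[OF this] show ?thesis using False by (simp add: mat_one_def)
    qed
    have "mat_mul n A B i j = (\<Sum>k=1..n. A i k * B k j)" using True by (simp add: mat_mul_def)
    also have "\<dots> = (\<Sum>k=1..n. (if k = i then B i j else 0) + (if k = j then A i j else 0)
                          - (if k = i \<and> k = j then 1 else 0))"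
    proof (rule sum.cong[OF refl])
      fix k assume k: "k \<in> {1..n}"
      show "A i k * B k j = (if k = i then B i j else 0) + (if k = j then A i j else 0)
                          - (if k = i \<and> k = j then 1 else 0)"
      proof (cases "k = i")
        case True
        then show ?thesis using UT_diag[OF A k] UT_diag[OF B k] by auto
      next
        case False
        show ?thesis
        proof (cases "A i k = 0")
          case True then show ?thesis using False by auto
        next
          case nz: False
          then have "(i, k) \<in> Phi_Ups n d" using UT_off[OF A] False by auto
          then have "d < k" by (auto simp: Phi_Ups_def)
          then have "B k j = mat_one n k j" using row_triv[OF B order_refl] k by auto
          then show ?thesis using False k by (auto simp: mat_one_def)
        qed
      qed
    qed
    also have "\<dots> = B i j + A i j - (\<Sum>k=1..n. if k = i \<and> k = j then 1 else 0)"
      using True by (simp add: sum.distrib sum_subtractf)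
    also have "\<dots> = B i j + A i j - mat_one n i j"
      using S1 by simp
    finally show ?thesis by (simp only: add.commute)
  next
    case False
    have "mat_mul n A B i j = 0" using False by (rule mat_mul_out)
    moreover have "mat_one n i j = 0" using False by (rule mat_one_out)
    ultimately show ?thesis using UT_out[OF A False] UT_out[OF B False] by simp
  qed
qed

lemma Ups_comm:
  assumes A: "A \<in> UT n (Phi_Ups n d)" and B: "B \<in> UT n (Phi_Ups n d)"
  shows "mat_mul n A B = mat_mul n B A"
  unfolding Ups_mult_formula[OF A B] Ups_mult_formula[OF B A] by (simp only: add.commute)

definition piL :: "nat \<Rightarrow> nat \<Rightarrow> (nat \<Rightarrow> nat \<Rightarrow> 'a::field) \<Rightarrow> (nat \<Rightarrow> nat \<Rightarrow> 'a)" where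
  "piL n d A = (\<lambda>i j. if i \<le> d then mat_one n i j else A i j)"

definition cL :: "nat \<Rightarrow> nat \<Rightarrow> (nat \<Rightarrow> nat \<Rightarrow> 'a::field) \<Rightarrow> (nat \<Rightarrow> nat \<Rightarrow> 'a)" where
  "cL n d A = (\<lambda>i j. if i \<le> d then A i j else mat_one n i j)"

lemma UL_nz: "A \<in> UT n (Phi_UL n d) \<Longrightarrow> A i k \<noteq> 0 \<Longrightarrow> i \<le> k"
  using UT_off[of A n "Phi_UL n d" i k] by (cases "i = k") (auto simp: Phi_UL_def)

lemma sum_UL_cong:
  assumes A: "A \<in> UT n (Phi_UL n d)" and i: "d < i"
    and fg: "\<And>k. d < k \<Longrightarrow> k \<le> n \<Longrightarrow> f k = g k"
  shows "(\<Sum>k=1..n. A i k * f k) = (\<Sum>k=1..n. A i k * g k)"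
proof (rule sum.cong[OF refl])
  fix k assume k: "k \<in> {1..n}"
  show "A i k * f k = A i k * g k"
  proof (cases "A i k = 0")
    case False
    then have "i \<le> k" by (rule UL_nz[OF A])
    then show ?thesis using fg[of k] i k by simp
  qed simp
qed

lemma piL_Uphi:
  assumes A: "A \<in> UT n (Phi_UL n d)"
  shows "piL n d A \<in> UT n (Phi_Uphi n d)"
proof -
  have "(i, j) \<in> Phi_Uphi n d" if "i \<noteq> j" "piL n d A i j \<noteq> 0" for i j
  proof -
    have "\<not> i \<le> d" using that by (auto simp: piL_def mat_one_def split: if_splits)
    then have "A i j \<noteq> 0" using that by (simp add: piL_def)
    then have "(i, j) \<in> Phi_UL n d" using A that by (auto simp: UT_def)
    then show ?thesis using \<open>\<not> i \<le> d\<close> mod_gap[of i j d] by (auto simp: Phi_UL_def Phi_Uphi_def)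
  qed
  then show ?thesis
  proof (intro UT_I)
    fix i j assume "\<not> (i \<in> {1..n} \<and> j \<in> {1..n})"
    then show "piL n d A i j = 0" using UT_out[OF A] by (auto simp: piL_def mat_one_def)
  next
    fix i assume "i \<in> {1..n}"
    then show "piL n d A i i = 1" using UT_diag[OF A] by (auto simp: piL_def mat_one_def)
  qed
qed

lemma cL_Ups:
  assumes A: "A \<in> UT n (Phi_UL n d)"
  shows "cL n d A \<in> UT n (Phi_Ups n d)"
proof -
  have "(i, j) \<in> Phi_Ups n d" if "i \<noteq> j" "cL n d A i j \<noteq> 0" for i j
  proof -
    have "i \<le> d" using that by (auto simp: cL_def mat_one_def split: if_splits)
    then have "A i j \<noteq> 0" using that by (simp add: cL_def)
    then have "(i, j) \<in> Phi_UL n d" using A that by (auto simp: UT_def)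
    then show ?thesis using \<open>i \<le> d\<close> mod_gap[of i j d] by (auto simp: Phi_UL_def Phi_Ups_def)
  qed
  then show ?thesis
  proof (intro UT_I)
    fix i j assume "\<not> (i \<in> {1..n} \<and> j \<in> {1..n})"
    then show "cL n d A i j = 0" using UT_out[OF A] by (auto simp: cL_def mat_one_def)
  next
    fix i assume "i \<in> {1..n}"
    then show "cL n d A i i = 1" using UT_diag[OF A] by (auto simp: cL_def mat_one_def)
  qed
qed

lemma piL_cL:
  assumes A: "A \<in> UT n (Phi_UL n d)"
  shows "mat_mul n (piL n d A) (cL n d A) = A"
proof (rule ext, rule ext)
  fix i j
  show "mat_mul n (piL n d A) (cL n d A) i j = A i j"
  proof (cases "i \<in> {1..n} \<and> j \<in> {1..n}")
    case True
    show ?thesis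
    proof (cases "i \<le> d")
      case True
      then show ?thesis using \<open>i \<in> {1..n} \<and> j \<in> {1..n}\<close>
        sum_one_left[of i n "\<lambda>k. cL n d A k j"] by (simp add: mat_mul_def piL_def cL_def)
    next
      case False
      have "mat_mul n (piL n d A) (cL n d A) i j = (\<Sum>k=1..n. A i k * cL n d A k j)"
        using True False by (simp add: mat_mul_def piL_def)
      also have "\<dots> = (\<Sum>k=1..n. A i k * mat_one n k j)"
        using False by (intro sum_UL_cong[OF A]) (auto simp: cL_def)
      also have "\<dots> = A i j" using True sum_one_right[of j n "\<lambda>k. A i k"] by simp
      finally show ?thesis .
    qed
  next
    case False
    then show ?thesis using UT_out[OF A False] mat_mul_out[OF False] by simp
  qed
qed

lemma piL_mult:
  assumes A: "A \<in> UT n (Phi_UL n d)" and B: "B \<in> UT n (Phi_UL n d)"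
  shows "piL n d (mat_mul n A B) = mat_mul n (piL n d A) (piL n d B)"
proof (rule ext, rule ext)
  fix i j
  show "piL n d (mat_mul n A B) i j = mat_mul n (piL n d A) (piL n d B) i j"
  proof (cases "i \<in> {1..n} \<and> j \<in> {1..n}")
    case True
    show ?thesis
    proof (cases "i \<le> d")
      case True
      then show ?thesis using \<open>i \<in> {1..n} \<and> j \<in> {1..n}\<close>
        sum_one_left[of i n "\<lambda>k. piL n d B k j"] by (simp add: mat_mul_def piL_def)
    next
      case False
      have "mat_mul n (piL n d A) (piL n d B) i j = (\<Sum>k=1..n. A i k * piL n d B k j)"
        using True False by (simp add: mat_mul_def piL_def)
      also have "\<dots> = (\<Sum>k=1..n. A i k * B k j)"
        using False by (intro sum_UL_cong[OF A]) (auto simp: piL_def)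
      also have "\<dots> = piL n d (mat_mul n A B) i j" using True False by (simp add: piL_def mat_mul_def)
      finally show ?thesis by simp
    qed
  next
    case False
    have "mat_one n i j = (0::'a)" using False by (rule mat_one_out)
    then have "piL n d (mat_mul n A B) i j = 0" using mat_mul_out[OF False, of A B]
      by (simp add: piL_def)
    then show ?thesis using mat_mul_out[OF False] by simp
  qed
qed

lemma piL_Ups:
  assumes A: "A \<in> UT n (Phi_Ups n d)"
  shows "piL n d A = mat_one n"
proof (rule ext, rule ext)
  fix i j
  show "piL n d A i j = mat_one n i j"
  proof (cases "i \<le> d")
    case False
    show ?thesis
    proof (cases "i \<le> n")
      case True
      then show ?thesis using row_triv[OF A order_refl, of i j] False by (simp add: piL_def)
    next
      case F2: False
      then show ?thesis using UT_out[OF A, of i j] False by (simp add: piL_def mat_one_def)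
    qed
  qed (simp add: piL_def)
qed

lemma piL_ker:
  assumes A: "A \<in> UT n (Phi_UL n d)" and p: "piL n d A = mat_one n"
  shows "A \<in> UT n (Phi_Ups n d)"
proof -
  have "(i, j) \<in> Phi_Ups n d" if "i \<noteq> j" "A i j \<noteq> 0" for i j
  proof -
    have ij: "(i, j) \<in> Phi_UL n d" using A that by (auto simp: UT_def)
    have "i \<le> d"
    proof (rule ccontr)
      assume "\<not> i \<le> d"
      then have "piL n d A i j = A i j" by (simp add: piL_def)
      then show False using p that by (simp add: mat_one_def)
    qed
    then show ?thesis using ij mod_gap[of i j d] by (auto simp: Phi_UL_def Phi_Ups_def)
  qed
  then show ?thesis using A UT_diag[OF A] UT_out[OF A] by (intro UT_I) auto
qed



lemma mod_unique:
  fixes a p d :: nat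
  assumes "a \<in> {1..d}" "p \<in> {1..d}" "a mod d = p mod d"
  shows "a = p"
proof (rule ccontr)
  assume "a \<noteq> p"
  then have "a < p \<or> p < a" by auto
  then show False
  proof
    assume "a < p" then have "a + d \<le> p" using mod_gap assms(3) by blast
    then show False using assms by auto
  next
    assume "p < a" then have "p + d \<le> a" using mod_gap assms(3) by metis
    then show False using assms by auto
  qed
qed

lemma p_props:
  assumes d1: "1 \<le> d" and ij: "(i, j) \<in> Phi_Uphi n d" and p: "p \<in> {1..d}" "p mod d = i mod d"
  shows "(p, i) \<in> Phi_Ups n d
       \<and> (\<lambda>k. root_char (p, i) k + root_char (i, j) k) \<in> roots_GL n
       \<and> (\<lambda>k. root_char (p, i) k + root_char (i, j) k) = root_char (p, j)"
proof -
  have r: "d + 1 \<le> i" "i \<le> n" "i + d \<le> j" "j \<le> n" "j mod d = i mod d"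
    using ij by (auto simp: Phi_Uphi_def)
  have "p < i" using p r by auto
  then have "p + d \<le> i" using mod_gap p(2) by metis
  then have A: "(p, i) \<in> Phi_Ups n d" using p r by (auto simp: Phi_Ups_def)
  have B: "(\<lambda>k. root_char (p, i) k + root_char (i, j) k) = root_char (p, j)"
    by (rule ext) (simp add: root_char_def)
  have "root_char (p, j) \<in> roots_GL n" using p r d1 unfolding roots_GL_def by force
  then show ?thesis using A B by simp
qed

lemma roots_part:
  assumes d1: "1 \<le> d" and ij: "(i, j) \<in> Phi_Uphi n d"
  shows "(\<exists>!\<alpha>. \<alpha> \<in> Phi_Ups n d \<and> (\<lambda>k. root_char \<alpha> k + root_char (i, j) k) \<in> roots_GL n)
          \<and> (\<forall>p. p \<in> {1..d} \<and> p mod d = i mod d \<longrightarrow>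
               (p, i) \<in> Phi_Ups n d
             \<and> (\<lambda>k. root_char (p, i) k + root_char (i, j) k) \<in> roots_GL n
             \<and> (\<lambda>k. root_char (p, i) k + root_char (i, j) k) = root_char (p, j))"
proof -
  have r: "d + 1 \<le> i" "i \<le> n" "i + d \<le> j" "j \<le> n" "j mod d = i mod d"
    using ij by (auto simp: Phi_Uphi_def)
  define p0 where "p0 = (if i mod d = 0 then d else i mod d)"
  have lt: "i mod d < d" using d1 by simp
  have p01: "p0 \<in> {1..d}" using d1 lt unfolding p0_def by auto
  have p02: "p0 mod d = i mod d" unfolding p0_def by simp
  note p0 = p01 p02
  note P0 = p_props[OF d1 ij p0]
  have uniq: "\<alpha> = (p0, i)" if a: "\<alpha> \<in> Phi_Ups n d" "(\<lambda>k. root_char \<alpha> k + root_char (i, j) k) \<in> roots_GL n" for \<alpha>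
  proof -
    obtain a b where ab: "\<alpha> = (a, b)" by force
    have ar: "1 \<le> a" "a \<le> d" "a + d \<le> b" "b \<le> n" "b mod d = a mod d"
      using a(1) ab by (auto simp: Phi_Ups_def)
    obtain u v where uv: "u \<noteq> v" and eq: "(\<lambda>k. root_char (a, b) k + root_char (i, j) k) = root_char (u, v)"
      using a(2) ab unfolding roots_GL_def by blast
    have e: "root_char (a, b) k + root_char (i, j) k = root_char (u, v) k" for k
      using fun_cong[OF eq, of k] by simp
    have bi: "b = i"
    proof (rule ccontr)
      assume "b \<noteq> i"
      have "a \<noteq> i" "i \<noteq> j" "a \<noteq> b" "a \<noteq> j" using ar r by linarith+
      have "root_char (u, v) i = 1" using e[of i] \<open>b \<noteq> i\<close> \<open>a \<noteq> i\<close> \<open>i \<noteq> j\<close>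
        by (simp add: root_char_def)
      then have "u = i" by (simp add: root_char_def split: if_splits)
      have "root_char (u, v) a = 1" using e[of a] \<open>a \<noteq> b\<close> \<open>a \<noteq> i\<close> \<open>a \<noteq> j\<close>
        by (simp add: root_char_def)
      then have "u = a" by (simp add: root_char_def split: if_splits)
      then show False using \<open>u = i\<close> \<open>a \<noteq> i\<close> by simp
    qed
    have "a mod d = p0 mod d" using ar(5) bi p0(2) by simp
    then have "a = p0" using mod_unique[of a d p0] ar(1,2) p0(1) by simp
    then show ?thesis using ab bi by simp
  qed
  show ?thesis
  proof
    show "\<exists>!\<alpha>. \<alpha> \<in> Phi_Ups n d \<and> (\<lambda>k. root_char \<alpha> k + root_char (i, j) k) \<in> roots_GL n"
    proof (rule ex1I[of _ "(p0, i)"])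
      show "(p0, i) \<in> Phi_Ups n d \<and> (\<lambda>k. root_char (p0, i) k + root_char (i, j) k) \<in> roots_GL n"
        using P0 by blast
    next
      fix \<alpha> assume "\<alpha> \<in> Phi_Ups n d \<and> (\<lambda>k. root_char \<alpha> k + root_char (i, j) k) \<in> roots_GL n"
      then show "\<alpha> = (p0, i)" using uniq by simp
    qed
    show "\<forall>p. p \<in> {1..d} \<and> p mod d = i mod d \<longrightarrow>
               (p, i) \<in> Phi_Ups n d
             \<and> (\<lambda>k. root_char (p, i) k + root_char (i, j) k) \<in> roots_GL n
             \<and> (\<lambda>k. root_char (p, i) k + root_char (i, j) k) = root_char (p, j)"
    proof (intro allI impI)
      fix p assume "p \<in> {1..d} \<and> p mod d = i mod d"
      then show "(p, i) \<in> Phi_Ups n d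
             \<and> (\<lambda>k. root_char (p, i) k + root_char (i, j) k) \<in> roots_GL n
             \<and> (\<lambda>k. root_char (p, i) k + root_char (i, j) k) = root_char (p, j)"
        using p_props[OF d1 ij, of p] by blast
    qed
  qed
qed



lemma Ups_sub_UL: "1 \<le> d \<Longrightarrow> Phi_Ups n d \<subseteq> Phi_UL n d"
  by (auto simp: Phi_Ups_def Phi_UL_def)

lemma Uphi_sub_UL: "1 \<le> d \<Longrightarrow> Phi_Uphi n d \<subseteq> Phi_UL n d"
  by (auto simp: Phi_Uphi_def Phi_UL_def)

lemma incl_Ups: "1 \<le> d \<Longrightarrow> (Upsilon n d :: (nat \<Rightarrow> nat \<Rightarrow> 'a::field) set) \<subseteq> U_L n d"
  unfolding U_L_def Upsilon_UT
  by (simp add: UT_eq_generate[OF upper_UL closed_UL] UT_mono[OF Ups_sub_UL])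

lemma incl_Uphi: "1 \<le> d \<Longrightarrow> (U_phi n d :: (nat \<Rightarrow> nat \<Rightarrow> 'a::field) set) \<subseteq> U_L n d"
  unfolding U_L_def U_phi_def
  by (simp add: UT_eq_generate[OF upper_UL closed_UL] UT_eq_generate[OF upper_Uphi closed_Uphi] UT_mono[OF Uphi_sub_UL])

theorem lemma10p1:
  fixes n d :: nat
  assumes "1 \<le> d" and "d \<le> n"
  defines "G \<equiv> (GLn n :: (nat \<Rightarrow> nat \<Rightarrow> 'a::field) monoid)"
  shows "subgroup (U_L n d) G
       \<and> subgroup (Upsilon n d) G
       \<and> Upsilon n d \<subseteq> U_L n d
       \<and> (\<forall>x\<in>Upsilon n d. \<forall>y\<in>Upsilon n d. x \<otimes>\<^bsub>G\<^esub> y = y \<otimes>\<^bsub>G\<^esub> x)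
       \<and> Upsilon n d \<lhd> (G\<lparr>carrier := U_L n d\<rparr>)
       \<and> subgroup (U_phi n d) G
       \<and> U_phi n d \<subseteq> U_L n d
       \<and> U_phi n d \<inter> Upsilon n d = {\<one>\<^bsub>G\<^esub>}
       \<and> set_mult G (U_phi n d) (Upsilon n d) = U_L n d
       \<and> (\<forall>i j. (i, j) \<in> Phi_Uphi n d \<longrightarrow>
            (\<exists>!\<alpha>. \<alpha> \<in> Phi_Ups n d \<and> (\<lambda>k. root_char \<alpha> k + root_char (i, j) k) \<in> roots_GL n)
          \<and> (\<forall>p. p \<in> {1..d} \<and> p mod d = i mod d \<longrightarrow>
               (p, i) \<in> Phi_Ups n d
             \<and> (\<lambda>k. root_char (p, i) k + root_char (i, j) k) \<in> roots_GL n
             \<and> (\<lambda>k. root_char (p, i) k + root_char (i, j) k) = root_char (p, j)))"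
proof -
  note d1 = assms(1)
  interpret G: group G unfolding G_def by (rule group_GLn)
  have mulG: "x \<otimes>\<^bsub>G\<^esub> y = mat_mul n x y" for x y by (simp add: G_def GLn_def)
  have oneG: "\<one>\<^bsub>G\<^esub> = mat_one n" by (simp add: G_def GLn_def)
  have UL: "(U_L n d :: (nat \<Rightarrow> nat \<Rightarrow> 'a) set) = UT n (Phi_UL n d)"
    unfolding U_L_def by (rule UT_eq_generate[OF upper_UL closed_UL])
  have Uphi: "(U_phi n d :: (nat \<Rightarrow> nat \<Rightarrow> 'a) set) = UT n (Phi_Uphi n d)"
    unfolding U_phi_def by (rule UT_eq_generate[OF upper_Uphi[OF d1] closed_Uphi])
  have Ups: "(Upsilon n d :: (nat \<Rightarrow> nat \<Rightarrow> 'a) set) = UT n (Phi_Ups n d)"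
    by (rule Upsilon_UT[OF d1])
  have sUL: "subgroup (U_L n d) G" unfolding UL G_def by (rule UT_subgroup[OF upper_UL closed_UL])
  have sUphi: "subgroup (U_phi n d) G" unfolding Uphi G_def
    by (rule UT_subgroup[OF upper_Uphi[OF d1] closed_Uphi])
  have sUps: "subgroup (Upsilon n d) G" unfolding Ups G_def
    by (rule UT_subgroup[OF upper_Ups[OF d1] closed_Ups[OF d1]])
  have incl1: "(Upsilon n d :: (nat \<Rightarrow> nat \<Rightarrow> 'a) set) \<subseteq> U_L n d" unfolding Ups UL by (rule UT_mono[OF Ups_sub_UL[OF d1]])
  have incl2: "(U_phi n d :: (nat \<Rightarrow> nat \<Rightarrow> 'a) set) \<subseteq> U_L n d" unfolding Uphi UL by (rule UT_mono[OF Uphi_sub_UL[OF d1]])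
  have comm: "\<forall>x\<in>Upsilon n d. \<forall>y\<in>Upsilon n d. x \<otimes>\<^bsub>G\<^esub> y = y \<otimes>\<^bsub>G\<^esub> x"
    unfolding mulG Ups using Ups_comm by (intro ballI) (rule Ups_comm)
  have normal: "Upsilon n d \<lhd> (G\<lparr>carrier := U_L n d\<rparr>)"
  proof -
    interpret H: group "G\<lparr>carrier := U_L n d\<rparr>" by (rule subgroup.subgroup_is_group[OF sUL G.group_axioms])
    show ?thesis
    proof (subst H.normal_inv_iff, intro conjI ballI)
      show "subgroup (Upsilon n d) (G\<lparr>carrier := U_L n d\<rparr>)"
        by (rule G.subgroup_incl[OF sUps sUL incl1])
    next
      fix x h :: "nat \<Rightarrow> nat \<Rightarrow> 'a" assume x: "x \<in> carrier (G\<lparr>carrier := U_L n d\<rparr>)" and h: "h \<in> Upsilon n d"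
      have xU: "x \<in> U_L n d" using x by simp
      have invx: "inv\<^bsub>G\<lparr>carrier := U_L n d\<rparr>\<^esub> x = inv\<^bsub>G\<^esub> x" using G.m_inv_consistent[OF sUL xU] .
      define y where "y = inv\<^bsub>G\<^esub> x"
      have yU: "y \<in> U_L n d" unfolding y_def using subgroup.m_inv_closed[OF sUL xU] .
      have xy: "mat_mul n x y = mat_one n"
        using G.r_inv[of x] subgroup.mem_carrier[OF sUL xU] unfolding y_def mulG oneG by simp
      have hU: "h \<in> U_L n d" using h incl1 by auto
      have xUT: "x \<in> UT n (Phi_UL n d)" and yUT: "y \<in> UT n (Phi_UL n d)"
        and hUT: "h \<in> UT n (Phi_UL n d)" using xU yU hU UL by auto
      have hUps: "h \<in> UT n (Phi_Ups n d)" using h Ups by auto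
      have xhUT: "mat_mul n x h \<in> UT n (Phi_UL n d)" by (rule UT_mult[OF upper_UL closed_UL xUT hUT])
      have MUT: "mat_mul n (mat_mul n x h) y \<in> UT n (Phi_UL n d)"
        by (rule UT_mult[OF upper_UL closed_UL xhUT yUT])
      have pxok: "supp_ok n (piL n d x)"
        using piL_Uphi[OF xUT] by (simp add: UT_def)
      have "piL n d (mat_mul n (mat_mul n x h) y) = mat_mul n (mat_mul n (piL n d x) (piL n d h)) (piL n d y)"
        using piL_mult[OF xhUT yUT] piL_mult[OF xUT hUT] by simp
      also have "\<dots> = mat_mul n (piL n d x) (piL n d y)"
        using piL_Ups[OF hUps] mul_one_right[OF pxok] by simp
      also have "\<dots> = piL n d (mat_mul n x y)" using piL_mult[OF xUT yUT] by simp
      also have "\<dots> = mat_one n" using xy piL_Ups[OF one_UT] by simp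
      finally have "mat_mul n (mat_mul n x h) y \<in> UT n (Phi_Ups n d)"
        by (rule piL_ker[OF MUT])
      then show "x \<otimes>\<^bsub>G\<lparr>carrier := U_L n d\<rparr>\<^esub> h \<otimes>\<^bsub>G\<lparr>carrier := U_L n d\<rparr>\<^esub>
                   inv\<^bsub>G\<lparr>carrier := U_L n d\<rparr>\<^esub> x \<in> Upsilon n d"
        using invx Ups unfolding y_def by (simp add: mulG)
    qed
  qed
  have inter: "U_phi n d \<inter> Upsilon n d = {\<one>\<^bsub>G\<^esub>}"
  proof
    show "U_phi n d \<inter> Upsilon n d \<subseteq> {\<one>\<^bsub>G\<^esub>}"
    proof
      fix A :: "nat \<Rightarrow> nat \<Rightarrow> 'a" assume A: "A \<in> U_phi n d \<inter> Upsilon n d"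
      then have A1: "A \<in> UT n (Phi_Uphi n d)" and A2: "A \<in> UT n (Phi_Ups n d)" using Uphi Ups by auto
      have "A \<in> UT n {}"
      proof (rule UT_I)
        fix i j assume "\<not> (i \<in> {1..n} \<and> j \<in> {1..n})" then show "A i j = 0" by (rule UT_out[OF A1])
      next
        fix i assume "i \<in> {1..n}" then show "A i i = 1" by (rule UT_diag[OF A1])
      next
        fix i j assume ij: "i \<noteq> j" "A i j \<noteq> 0"
        have "(i, j) \<in> Phi_Uphi n d" by (rule UT_off[OF A1 ij])
        moreover have "(i, j) \<in> Phi_Ups n d" by (rule UT_off[OF A2 ij])
        ultimately show "(i, j) \<in> {}" by (auto simp: Phi_Uphi_def Phi_Ups_def)
      qed
      then show "A \<in> {\<one>\<^bsub>G\<^esub>}" using UT_empty oneG by auto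
    qed
  next
    show "{\<one>\<^bsub>G\<^esub>} \<subseteq> U_phi n d \<inter> Upsilon n d"
      using subgroup.one_closed[OF sUphi] subgroup.one_closed[OF sUps] by auto
  qed
  have prod: "set_mult G (U_phi n d) (Upsilon n d) = U_L n d"
  proof
    show "set_mult G (U_phi n d) (Upsilon n d) \<subseteq> U_L n d"
      unfolding set_mult_def using subgroup.m_closed[OF sUL] incl1 incl2 by blast
  next
    show "U_L n d \<subseteq> set_mult G (U_phi n d) (Upsilon n d)"
    proof
      fix A :: "nat \<Rightarrow> nat \<Rightarrow> 'a" assume "A \<in> U_L n d"
      then have AUT: "A \<in> UT n (Phi_UL n d)" using UL by simp
      have "piL n d A \<in> U_phi n d" using piL_Uphi[OF AUT] Uphi by simp
      moreover have "cL n d A \<in> Upsilon n d" using cL_Ups[OF AUT] Ups by simp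
      moreover have "A = piL n d A \<otimes>\<^bsub>G\<^esub> cL n d A" using piL_cL[OF AUT] mulG by simp
      ultimately show "A \<in> set_mult G (U_phi n d) (Upsilon n d)"
        unfolding set_mult_def by blast
    qed
  qed
  have roots: "\<forall>i j. (i, j) \<in> Phi_Uphi n d \<longrightarrow>
            (\<exists>!\<alpha>. \<alpha> \<in> Phi_Ups n d \<and> (\<lambda>k. root_char \<alpha> k + root_char (i, j) k) \<in> roots_GL n)
          \<and> (\<forall>p. p \<in> {1..d} \<and> p mod d = i mod d \<longrightarrow>
               (p, i) \<in> Phi_Ups n d
             \<and> (\<lambda>k. root_char (p, i) k + root_char (i, j) k) \<in> roots_GL n
             \<and> (\<lambda>k. root_char (p, i) k + root_char (i, j) k) = root_char (p, j))"
    by (intro allI impI) (rule roots_part[OF d1])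
  show ?thesis
    apply (intro conjI sUL sUps comm normal sUphi inter prod roots)
     apply (rule incl_Ups[OF d1])
    apply (rule incl_Uphi[OF d1])
    done
qed

end
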